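(* Let $f,g\in\mathbb N\{x_1,\dots,x_n\}$ have disjoint supports, and suppose $f-g$ is a polynomial identity of the ring $M_n(\mathbb Z)$ (i.e. $f(A_1,\dots,A_n)-g(A_1,\dots,A_n)=0$ for all $A_i\in M_n(\mathbb Z)$). Then $(f,g)$ is a semiring$^\dagger$ polynomial identity of $M_n(R)$ for every commutative semiring$^\dagger$ $R$.
   Context: A semiring$^\dagger$ $(R,+,\cdot,1)$ is a set with binary operations such that $(R,+)$ is an abelian semigroup, $(R,\cdot,1)$ is a monoid, and multiplication distributes over addition (no zero element required); it is commutative if multiplication is commutative. $\mathbb N\{x_1,\dots,x_m\}$ denotes the free $\mathbb N$-semiring$^\dagger$: the monoid semiring over $\mathbb N$ of the free (word) monoid on noncommuting indeterminates $x_1,\dots,x_m$; the support of $f$ is the set of words with nonzero coefficient. A pair $(f,g)$ of elements of $\mathbb N\{x_1,\dots,x_m\}$ is a (semiring$^\dagger$) polynomial identity of a semiring$^\dagger$ $S$ if $f(r_1,\dots,r_m)=g(r_1,\dots,r_m)$ for all $r_1,\dots,r_m\in S$. $M_n(R)$ is the semiring$^\dagger$ of $n\times n$ matrices with the usual matrix operations. *)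

theory Defs
  imports Main "HOL-Library.List_Lexorder"
begin

text \<open>Elements of the free N-semiring N{x_0,...,x_(m-1)} on noncommuting indeterminates:
  finitely supported coefficient functions on words (lists of variable indices).\<close>
type_synonym npoly = "nat list \<Rightarrow> nat"

definition supp :: "npoly \<Rightarrow> nat list set" where
  "supp f = {w. f w \<noteq> 0}"

definition is_npoly :: "nat \<Rightarrow> npoly \<Rightarrow> bool" where
  "is_npoly m f \<longleftrightarrow> finite (supp f) \<and> (\<forall>w\<in>supp f. set w \<subseteq> {..<m})"

text \<open>Sums of nonempty lists (no additive zero needed).\<close>
fun nsum :: "'a::plus list \<Rightarrow> 'a" where
  "nsum [x] = x"
| "nsum (x # y # xs) = x + nsum (y # xs)"
| "nsum [] = undefined"

text \<open>Sum in R with a formal zero adjoined: None represents the (possibly absent) zero.\<close>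
definition osum :: "'a::plus list \<Rightarrow> 'a option" where
  "osum xs = (if xs = [] then None else Some (nsum xs))"

text \<open>n x n matrices: only entries with indices < n are relevant.\<close>
type_synonym 'a mat = "nat \<Rightarrow> nat \<Rightarrow> 'a"

definition mmul :: "nat \<Rightarrow> 'a::{plus,times} mat \<Rightarrow> 'a mat \<Rightarrow> 'a mat" where
  "mmul n A B = (\<lambda>i j. nsum (map (\<lambda>k. A i k * B k j) [0..<n]))"

fun wprod :: "nat \<Rightarrow> (nat \<Rightarrow> 'a::{plus,times} mat) \<Rightarrow> nat list \<Rightarrow> 'a mat" where
  "wprod n A [] = undefined"
| "wprod n A (v # vs) = foldl (\<lambda>M u. mmul n M (A u)) (A v) vs"

text \<open>Summands of entry (i,j) of f(A): each word w contributes f w copies of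
  (A_w)_(ij); the empty word contributes the identity matrix (1 on the diagonal,
  nothing off the diagonal).\<close>
definition entry_terms ::
  "nat \<Rightarrow> npoly \<Rightarrow> (nat \<Rightarrow> 'a::{plus,times,one} mat) \<Rightarrow> nat \<Rightarrow> nat \<Rightarrow> 'a list" where
  "entry_terms n f A i j =
     concat (map (\<lambda>w. replicate (f w) (if w = [] then 1 else wprod n A w i j))
       (filter (\<lambda>w. w \<noteq> [] \<or> i = j) (sorted_list_of_set (supp f))))"

text \<open>Entry (i,j) of f(A) in M_n(R), computed in R with a zero adjoined (None = 0).\<close>
definition peval ::
  "nat \<Rightarrow> npoly \<Rightarrow> (nat \<Rightarrow> 'a::{plus,times,one} mat) \<Rightarrow> nat \<Rightarrow> nat \<Rightarrow> 'a option" where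
  "peval n f A i j = osum (entry_terms n f A i j)"

definition peval_int :: "nat \<Rightarrow> npoly \<Rightarrow> (nat \<Rightarrow> int mat) \<Rightarrow> nat \<Rightarrow> nat \<Rightarrow> int" where
  "peval_int n f A i j = (case peval n f A i j of None \<Rightarrow> 0 | Some x \<Rightarrow> x)"

end

theory Submission imports Defs "HOL-Library.Multiset" "HOL-Library.Countable" begin

datatype 'a zx = Zr | Vl 'a

instantiation zx :: ("{comm_semiring,comm_monoid_mult}") comm_semiring_1
begin
definition "zero_zx = Zr"
definition "one_zx = Vl 1"
fun plus_zx :: "'a zx \<Rightarrow> 'a zx \<Rightarrow> 'a zx" where
  "plus_zx Zr b = b" | "plus_zx (Vl a) Zr = Vl a" | "plus_zx (Vl a) (Vl b) = Vl (a+b)"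
fun times_zx :: "'a zx \<Rightarrow> 'a zx \<Rightarrow> 'a zx" where
  "times_zx Zr b = Zr" | "times_zx (Vl a) Zr = Zr" | "times_zx (Vl a) (Vl b) = Vl (a*b)"
instance
proof
  fix a b c :: "'a zx"
  show "a + b + c = a + (b + c)" by (cases a; cases b; cases c) (auto simp: add.assoc)
  show "a + b = b + a" by (cases a; cases b) (auto simp: add.commute)
  show "0 + a = a" by (simp add: zero_zx_def)
  show "a * b * c = a * (b * c)" by (cases a; cases b; cases c) (auto simp: mult.assoc)
  show "a * b = b * a" by (cases a; cases b) (auto simp: mult.commute)
  show "1 * a = a" by (cases a) (auto simp: one_zx_def)
  show "(a + b) * c = a * c + b * c" by (cases a; cases b; cases c) (auto simp: distrib_right)
  show "0 * a = 0" by (simp add: zero_zx_def)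
  show "a * 0 = 0" by (cases a) (auto simp: zero_zx_def)
  show "(0::'a zx) \<noteq> 1" by (simp add: zero_zx_def one_zx_def)
qed
end

lemma nsum_hom:
  assumes "\<And>a b. h (a + b) = h a + h b" "xs \<noteq> []"
  shows "h (nsum xs) = (sum_list (map h xs) :: 'b::monoid_add)"
  using assms(2) by (induction xs rule: nsum.induct) (auto simp: assms(1))

lemma osum_zx: "sum_list (map Vl xs) = (case osum xs of None \<Rightarrow> Zr | Some s \<Rightarrow> Vl s)"
proof (cases "xs = []")
  case True then show ?thesis by (simp add: osum_def zero_zx_def)
next
  case False
  have "Vl (nsum xs) = sum_list (map Vl xs)"
    by (rule nsum_hom[OF _ False]) simp
  then show ?thesis using False by (simp add: osum_def)
qed

lemma osum_int: "(case osum xs of None \<Rightarrow> 0 | Some s \<Rightarrow> s) = sum_list (xs :: int list)"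
proof (cases "xs = []")
  case True then show ?thesis by (simp add: osum_def)
next
  case False
  have "id (nsum xs) = sum_list (map id xs)"
    by (rule nsum_hom[OF _ False]) simp
  then show ?thesis using False by (simp add: osum_def)
qed

definition ev :: "('e \<Rightarrow> 'b::comm_semiring_1) \<Rightarrow> 'e multiset multiset \<Rightarrow> 'b" where
  "ev x T = (\<Sum>E\<in>#T. \<Prod>e\<in>#E. x e)"

lemma ev_empty[simp]: "ev x {#} = 0" by (simp add: ev_def)
lemma ev_add[simp]: "ev x (T1 + T2) = ev x T1 + ev x T2" by (simp add: ev_def)
lemma ev_sum: "ev x (\<Sum>w\<in>S. T w) = (\<Sum>w\<in>S. ev x (T w))"
  by (induction S rule: infinite_finite_induct) auto
lemma ev_repeat: "ev x (repeat_mset m T) = of_nat m * ev x T"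
  by (induction m) (auto simp: algebra_simps)
lemma ev_shift: "ev x (image_mset (add_mset e) T) = ev x T * x e"
  by (simp add: ev_def multiset.map_comp o_def sum_mset_distrib_left mult.commute)
lemma ev_single: "ev x {#{#e#}#} = x e" by (simp add: ev_def)
lemma ev_one: "ev x {#{#}#} = 1" by (simp add: ev_def)


definition mmulT :: "nat \<Rightarrow> (nat \<Rightarrow> nat \<Rightarrow> (nat\<times>nat\<times>nat) multiset multiset) \<Rightarrow> nat
   \<Rightarrow> (nat \<Rightarrow> nat \<Rightarrow> (nat\<times>nat\<times>nat) multiset multiset)" where
  "mmulT n MT u = (\<lambda>i j. \<Sum>k<n. image_mset (add_mset (u,k,j)) (MT i k))"

fun W :: "nat \<Rightarrow> nat list \<Rightarrow> nat \<Rightarrow> nat \<Rightarrow> (nat\<times>nat\<times>nat) multiset multiset" where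
  "W n [] i j = (if i = j then {#{#}#} else {#})"
| "W n (v # vs) i j = foldl (mmulT n) (\<lambda>i j. {#{#(v,i,j)#}#}) vs i j"

definition TT :: "nat \<Rightarrow> npoly \<Rightarrow> nat \<Rightarrow> nat \<Rightarrow> (nat\<times>nat\<times>nat) multiset multiset" where
  "TT n f i j = (\<Sum>w\<in>supp f. repeat_mset (f w) (W n w i j))"

lemma fold_hom:
  fixes h :: "'a::{plus,times,one} \<Rightarrow> 'b::comm_semiring_1"
  assumes hp: "\<And>a b. h (a+b) = h a + h b" and hm: "\<And>a b. h (a*b) = h a * h b" and n: "n > 0"
    and x: "x = (\<lambda>(v,k,l). h (A v k l))"
  shows "(\<forall>i j. i<n \<longrightarrow> j<n \<longrightarrow> h (M i j) = ev x (MT i j)) \<Longrightarrow> i<n \<Longrightarrow> j<n \<Longrightarrow>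
     h (foldl (\<lambda>M u. mmul n M (A u)) M vs i j) = ev x (foldl (mmulT n) MT vs i j)"
proof (induction vs arbitrary: M MT i j)
  case Nil
  then show ?case by simp
next
  case (Cons u vs)
  have "\<forall>i j. i<n \<longrightarrow> j<n \<longrightarrow> h (mmul n M (A u) i j) = ev x (mmulT n MT u i j)"
  proof (intro allI impI)
    fix i j assume ij: "i < n" "j < n"
    have ne: "map (\<lambda>k. M i k * A u k j) [0..<n] \<noteq> []" using n by simp
    have "h (mmul n M (A u) i j) = sum_list (map h (map (\<lambda>k. M i k * A u k j) [0..<n]))"
      unfolding mmul_def by (rule nsum_hom[OF hp ne])
    also have "\<dots> = (\<Sum>k<n. h (M i k) * h (A u k j))"
      by (simp add: o_def hm sum_set_upt_conv_sum_list_nat[symmetric] atLeast0LessThan)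
    also have "\<dots> = (\<Sum>k<n. ev x (MT i k) * x (u,k,j))"
      using Cons.prems(1) ij by (intro sum.cong) (auto simp: x)
    also have "\<dots> = ev x (mmulT n MT u i j)"
      by (simp add: mmulT_def ev_sum ev_shift)
    finally show "h (mmul n M (A u) i j) = ev x (mmulT n MT u i j)" .
  qed
  then show ?case using Cons.IH Cons.prems by simp
qed

lemma sum_list_concat_map: "sum_list (map h (concat (map g xs))) = sum_list (map (\<lambda>w. sum_list (map h (g w))) xs)"
  by (induction xs) auto

lemma expand:
  fixes h :: "'a::{plus,times,one} \<Rightarrow> 'b::comm_semiring_1"
  assumes hp: "\<And>a b. h (a+b) = h a + h b" and hm: "\<And>a b. h (a*b) = h a * h b" and h1: "h 1 = 1"
    and fin: "finite (supp f)" and n: "n > 0" and ij: "i < n" "j < n"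
  shows "sum_list (map h (entry_terms n f A i j)) = ev (\<lambda>(v,k,l). h (A v k l)) (TT n f i j)"
proof -
  define x where "x = (\<lambda>(v,k,l). h (A v k l))"
  define t where "t = (\<lambda>w. if w = [] then 1 else wprod n A w i j)"
  define P where "P = (\<lambda>w::nat list. w \<noteq> [] \<or> i = j)"
  have "sum_list (map h (entry_terms n f A i j)) =
     sum_list (map (\<lambda>w. of_nat (f w) * h (t w)) (filter P (sorted_list_of_set (supp f))))"
    unfolding entry_terms_def sum_list_concat_map t_def P_def
    by (simp add: sum_list_replicate)
  also have "\<dots> = (\<Sum>w\<in>{w\<in>supp f. P w}. of_nat (f w) * h (t w))"
    using fin by (simp add: sum_list_distinct_conv_sum_set Collect_conj_eq Int_commute)
  also have "\<dots> = (\<Sum>w\<in>supp f. if P w then of_nat (f w) * h (t w) else 0)"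
    using fin by (simp add: sum.inter_filter)
  also have "\<dots> = (\<Sum>w\<in>supp f. of_nat (f w) * ev x (W n w i j))"
  proof (rule sum.cong[OF refl])
    fix w show "(if P w then of_nat (f w) * h (t w) else 0) = of_nat (f w) * ev x (W n w i j)"
    proof (cases w)
      case Nil then show ?thesis by (auto simp: P_def t_def h1 ev_one)
    next
      case (Cons v vs)
      have "h (foldl (\<lambda>M u. mmul n M (A u)) (A v) vs i j)
          = ev x (foldl (mmulT n) (\<lambda>i j. {#{#(v,i,j)#}#}) vs i j)"
        by (rule fold_hom[OF hp hm n x_def]) (auto simp: ev_single x_def ij)
      then show ?thesis using Cons by (simp add: P_def t_def)
    qed
  qed
  also have "\<dots> = ev x (TT n f i j)"
    by (simp add: TT_def ev_sum ev_repeat)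
  finally show ?thesis by (simp add: x_def)
qed


lemma digits:
  fixes d1 d2 :: "nat \<Rightarrow> nat"
  assumes "\<forall>k<K. d1 k < B" "\<forall>k<K. d2 k < B" "(\<Sum>k<K. d1 k * B^k) = (\<Sum>k<K. d2 k * B^k)"
  shows "\<forall>k<K. d1 k = d2 k"
  using assms
proof (induction K arbitrary: d1 d2)
  case 0 then show ?case by simp
next
  case (Suc K)
  have dec: "(\<Sum>k<Suc K. d k * B^k) = d 0 + B * (\<Sum>k<K. d (Suc k) * B^k)" for d :: "nat \<Rightarrow> nat"
    by (subst sum.lessThan_Suc_shift) (simp add: sum_distrib_left algebra_simps)
  have B: "B > 0" using Suc.prems(1) by auto
  have a: "d1 0 < B" "d2 0 < B" using Suc.prems by auto
  have eq: "d1 0 + B * (\<Sum>k<K. d1 (Suc k) * B^k) = d2 0 + B * (\<Sum>k<K. d2 (Suc k) * B^k)"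
    using Suc.prems(3) dec by metis
  hence "(d1 0 + B * (\<Sum>k<K. d1 (Suc k) * B^k)) mod B = (d2 0 + B * (\<Sum>k<K. d2 (Suc k) * B^k)) mod B"
    by simp
  hence h0: "d1 0 = d2 0" using a by simp
  with eq B have "(\<Sum>k<K. d1 (Suc k) * B^k) = (\<Sum>k<K. d2 (Suc k) * B^k)" by simp
  with Suc.IH[of "\<lambda>k. d1 (Suc k)" "\<lambda>k. d2 (Suc k)"] Suc.prems
  have "\<forall>k<K. d1 (Suc k) = d2 (Suc k)" by simp
  with h0 show ?case by (auto simp: less_Suc_eq_0_disj)
qed

lemma msum_count:
  fixes g :: "nat \<Rightarrow> 'b::comm_semiring_1"
  shows "set_mset M \<subseteq> {..<N} \<Longrightarrow> (\<Sum>x\<in>#M. g x) = (\<Sum>c<N. of_nat (count M c) * g c)"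
proof (induction M)
  case empty then show ?case by simp
next
  case (add a M)
  have aN: "a < N" using add.prems by auto
  have "(\<Sum>c<N. of_nat (count (add_mset a M) c) * g c)
      = (\<Sum>c<N. of_nat (count M c) * g c + (if c = a then g c else 0))"
    by (intro sum.cong) (auto simp: algebra_simps)
  also have "\<dots> = (\<Sum>c<N. of_nat (count M c) * g c) + g a"
    using aN by (simp add: sum.distrib)
  finally show ?case using add by (simp add: add.commute)
qed

lemma inj_image_mset_on:
  assumes "inj_on f S" "set_mset M1 \<subseteq> S" "set_mset M2 \<subseteq> S" "image_mset f M1 = image_mset f M2"
  shows "M1 = M2"
proof -
  have "image_mset (inv_into S f) (image_mset f M) = M" if "set_mset M \<subseteq> S" for M
  proof -
    have "image_mset (inv_into S f) (image_mset f M) = image_mset id M"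
      unfolding multiset.map_comp using that assms(1)
      by (intro image_mset_cong) (auto simp: inv_into_f_f)
    then show ?thesis by simp
  qed
  from this[OF assms(2)] this[OF assms(3)] assms(4) show ?thesis by metis
qed

lemma le_sum_nat: "finite S \<Longrightarrow> a \<in> S \<Longrightarrow> (g a :: nat) \<le> sum g S"
  by (rule member_le_sum) auto

lemma prod_pow: "(\<Prod>e\<in>#E. (B::nat) ^ g e) = B ^ (\<Sum>e\<in>#E. g e)"
  by (induction E) (auto simp: power_add)

lemma kron:
  fixes T1 T2 :: "'e multiset multiset" and code :: "'e \<Rightarrow> nat"
  assumes ic: "inj code" and hyp: "\<forall>y::'e \<Rightarrow> nat. ev y T1 = ev y T2"
  shows "T1 = T2"
proof -
  define S where "S = set_mset T1 \<union> set_mset T2"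
  have finS: "finite S" by (simp add: S_def)
  define D where "D = Suc (\<Sum>E\<in>S. size E)"
  define N where "N = Suc (\<Sum>E\<in>S. \<Sum>e\<in>set_mset E. code e)"
  have codeN: "code e < N" if "E \<in> S" "e \<in># E" for E e
  proof -
    have "code e \<le> (\<Sum>e\<in>set_mset E. code e)" using that by (intro le_sum_nat) auto
    also have "\<dots> \<le> (\<Sum>E\<in>S. \<Sum>e\<in>set_mset E. code e)" using that finS by (intro le_sum_nat) auto
    finally show ?thesis by (simp add: N_def)
  qed
  have sizeD: "size E < D" if "E \<in> S" for E
    using le_sum_nat[OF finS that, of size] by (simp add: D_def)
  define key where "key E = (\<Sum>e\<in>#E. D ^ code e)" for E
  have key_eq: "key E = (\<Sum>c<N. count (image_mset code E) c * D^c)" if "E \<in> S" for E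
  proof -
    have "key E = (\<Sum>c\<in>#image_mset code E. D ^ c)"
      by (simp add: key_def multiset.map_comp o_def)
    also have "\<dots> = (\<Sum>c<N. of_nat (count (image_mset code E) c) * D^c)"
      by (rule msum_count) (use codeN that in auto)
    finally show ?thesis by simp
  qed
  have key_inj: "inj_on key S"
  proof (rule inj_onI)
    fix E1 E2 assume E: "E1 \<in> S" "E2 \<in> S" "key E1 = key E2"
    have lt: "count (image_mset code E) c < D" if "E \<in> S" for E c
      using count_le_size[of "image_mset code E" c] sizeD[OF that] by simp
    have "\<forall>c<N. count (image_mset code E1) c = count (image_mset code E2) c"
      by (rule digits) (use E lt key_eq in auto)
    moreover have "count (image_mset code E) c = 0" if "E \<in> S" "c \<ge> N" for E c
      using codeN[OF that(1)] that(2) by (auto simp: count_eq_zero_iff) (meson not_le)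
    ultimately have "image_mset code E1 = image_mset code E2"
      using E by (metis multiset_eqI not_less)
    then show "E1 = E2" by (metis inj_image_mset_on[OF ic] subset_UNIV)
  qed
  define B where "B = Suc (size T1 + size T2)"
  define y where "y e = B ^ (D ^ code e)" for e
  define K where "K = Suc (\<Sum>E\<in>S. key E)"
  have keyK: "key E < K" if "E \<in> S" for E
    using le_sum_nat[OF finS that, of key] by (simp add: K_def)
  have evT: "ev y T = (\<Sum>c<K. count (image_mset key T) c * B^c)" if "set_mset T \<subseteq> S" for T
  proof -
    have "ev y T = (\<Sum>E\<in>#T. B ^ key E)"
      by (simp add: ev_def y_def key_def prod_pow)
    also have "\<dots> = (\<Sum>c\<in>#image_mset key T. B ^ c)"
      by (simp add: multiset.map_comp o_def)
    also have "\<dots> = (\<Sum>c<K. of_nat (count (image_mset key T) c) * B^c)"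
      by (rule msum_count) (use keyK that in auto)
    finally show ?thesis by simp
  qed
  have "\<forall>c<K. count (image_mset key T1) c = count (image_mset key T2) c"
  proof (rule digits)
    show "\<forall>k<K. count (image_mset key T1) k < B"
      using count_le_size[of "image_mset key T1"] by (auto simp: B_def less_Suc_eq_le intro: trans_le_add1)
    show "\<forall>k<K. count (image_mset key T2) k < B"
      using count_le_size[of "image_mset key T2"] by (auto simp: B_def less_Suc_eq_le intro: trans_le_add2)
    show "(\<Sum>k<K. count (image_mset key T1) k * B ^ k) = (\<Sum>k<K. count (image_mset key T2) k * B ^ k)"
      using evT[of T1] evT[of T2] hyp by (auto simp: S_def)
  qed
  moreover have "count (image_mset key T) c = 0" if "set_mset T \<subseteq> S" "c \<ge> K" for T c
    using keyK that by (auto simp: count_eq_zero_iff) (meson not_le subsetD)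
  ultimately have "image_mset key T1 = image_mset key T2"
    by (metis multiset_eqI not_less S_def sup_ge1 sup_ge2 set_image_mset)
  then show ?thesis by (rule inj_image_mset_on[OF key_inj, rotated 2]) (auto simp: S_def)
qed

lemma of_nat_prodm: "of_nat (\<Prod>e\<in>#E. y e) = (\<Prod>e\<in>#E. (of_nat (y e) :: int))"
  by (induction E) auto

lemma ev_of_nat: "ev (\<lambda>e. of_nat (y e)) T = (of_nat (ev y T) :: int)"
  by (simp add: ev_def of_nat_sum_mset of_nat_prodm multiset.map_comp o_def)

theorem theorem5p4:
  fixes n :: nat and f g :: npoly
  assumes "is_npoly n f" and "is_npoly n g"
    and "supp f \<inter> supp g = {}"
    and "\<forall>(A :: nat \<Rightarrow> int mat) i j. i < n \<longrightarrow> j < n \<longrightarrow>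
           peval_int n f A i j - peval_int n g A i j = 0"
  shows "\<forall>(A :: nat \<Rightarrow> 'a::{comm_semiring, comm_monoid_mult} mat) i j.
           i < n \<longrightarrow> j < n \<longrightarrow> peval n f A i j = peval n g A i j"
proof (intro allI impI)
  fix A :: "nat \<Rightarrow> 'a mat" and i j assume ij: "i < n" "j < n"
  then have n: "n > 0" by simp
  have ff: "finite (supp f)" and fg: "finite (supp g)" using assms(1,2) by (auto simp: is_npoly_def)
  have TTeq: "TT n f i j = TT n g i j"
  proof (rule kron[where code = to_nat])
    show "inj (to_nat :: nat \<times> nat \<times> nat \<Rightarrow> nat)" by simp
    show "\<forall>y::nat \<times> nat \<times> nat \<Rightarrow> nat. ev y (TT n f i j) = ev y (TT n g i j)"
    proof
      fix y :: "nat \<times> nat \<times> nat \<Rightarrow> nat"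
      define Ai where "Ai v k l = int (y (v,k,l))" for v k l
      have xe: "(\<lambda>(v,k,l). Ai v k l) = (\<lambda>e. of_nat (y e))"
        by (auto simp: Ai_def)
      have "peval_int n h Ai i j = of_nat (ev y (TT n h i j))" if "finite (supp h)" for h
      proof -
        have "peval_int n h Ai i j = sum_list (map id (entry_terms n h Ai i j))"
          by (simp add: peval_int_def peval_def osum_int)
        also have "\<dots> = ev (\<lambda>(v,k,l). id (Ai v k l)) (TT n h i j)"
          by (rule expand) (use that n ij in auto)
        finally show ?thesis by (simp add: xe ev_of_nat)
      qed
      note pe = this
      have "peval_int n f Ai i j - peval_int n g Ai i j = 0" using assms(4) ij by blast
      then have "int (ev y (TT n f i j)) = int (ev y (TT n g i j))" using pe[OF ff] pe[OF fg] by simp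
      then show "ev y (TT n f i j) = ev y (TT n g i j)" by simp
    qed
  qed
  have "sum_list (map Vl (entry_terms n h A i j)) = ev (\<lambda>(v,k,l). Vl (A v k l)) (TT n h i j)"
    if "finite (supp h)" for h
    by (rule expand) (use that n ij in \<open>auto simp: one_zx_def\<close>)
  with ff fg TTeq have "sum_list (map Vl (entry_terms n f A i j)) = sum_list (map Vl (entry_terms n g A i j))"
    by simp
  then have "(case peval n f A i j of None \<Rightarrow> Zr | Some s \<Rightarrow> Vl s) = (case peval n g A i j of None \<Rightarrow> Zr | Some s \<Rightarrow> Vl s)"
    by (simp add: peval_def osum_zx)
  then show "peval n f A i j = peval n g A i j"
    by (cases "peval n f A i j"; cases "peval n g A i j") auto
qed

end
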